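(* Let $\mu=\prod_{i=1}^\infty\nu_i$ be a product probability measure on $[0,1]^{\mathbb{N}}$ and, for each $i$, let $m_i:=\int_{[0,1]}x\,d\nu_i(x)$, $m_i^{(2)}:=\int_{[0,1]}x^2\,d\nu_i(x)$ and $\epsilon_{1i}:=\nu_i(\{1\})$. Suppose $$\limsup_{n\to\infty}\frac1{\sqrt n}\sum_{i=1}^n\left(m_i-\tfrac12\right)<\infty,\qquad \liminf_{n\to\infty}\frac1n\sum_{i=1}^n\left(m_i-m_i^{(2)}\right)>0,\qquad \limsup_{n\to\infty}\frac1n\sum_{i=1}^n\epsilon_{1i}<\frac12,$$ and that $\sigma_{T,n}:=\left(\sum_{i=1}^n\int_{[0,1]}(x-m_i)^2\,d\nu_i(x)\right)^{1/2}\to\infty$ as $n\to\infty$. Then $\mu(\mathcal{C}_I)=0$.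
   Context: For a sequence $(p_i)_{i=1}^\infty\in[0,1]^{\mathbb{N}}$ let $X_1,X_2,\dots$ be independent random variables with values in $\{0,1\}$ and $\mathbb{P}(X_i=1)=p_i$. The sequence satisfies the Condorcet Jury Property if $\lim_{n\to\infty,\ n\text{ odd}}\mathbb{P}\left(\sum_{i=1}^nX_i>\frac n2\right)=1$; $\mathcal{C}_I$ is the set of sequences satisfying it. *)

theory Defs
  imports "HOL-Probability.Probability"
begin

text \<open>Sequences are indexed from 0 here: p 0, p 1, ... correspond to p_1, p_2, ... of the paper.
  The probability that strictly more than n/2 of the first n independent Bernoulli(p i)
  variables equal 1.\<close>
definition majority_prob :: "(nat \<Rightarrow> real) \<Rightarrow> nat \<Rightarrow> real" where
  "majority_prob p n =
     measure_pmf.prob (Pi_pmf {..<n} False (\<lambda>i. bernoulli_pmf (p i)))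
       {X. real (card {i\<in>{..<n}. X i}) > real n / 2}"

definition CJP :: "(nat \<Rightarrow> real) set" where
  "CJP = {p. (\<forall>i. p i \<in> {0..1}) \<and> (\<lambda>k. majority_prob p (2 * k + 1)) \<longlonglongrightarrow> 1}"

end

theory Submission
  imports Defs
begin

definition cnt :: "(nat \<Rightarrow> real) \<Rightarrow> nat set \<Rightarrow> nat pmf" where
  "cnt q I = map_pmf (\<lambda>X. card {i\<in>I. X i}) (Pi_pmf I False (\<lambda>i. bernoulli_pmf (q i)))"

lemma cnt_union:
  assumes "finite A" "finite B" "A \<inter> B = {}"
  shows "cnt q (A \<union> B) = map_pmf (\<lambda>(a,b). a + b) (pair_pmf (cnt q A) (cnt q B))"
proof -
  have "cnt q (A \<union> B) = map_pmf (\<lambda>X. card {i\<in>A \<union> B. X i})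
     (map_pmf (\<lambda>(f,g) x. if x \<in> A then f x else g x)
             (pair_pmf (Pi_pmf A False (\<lambda>i. bernoulli_pmf (q i))) (Pi_pmf B False (\<lambda>i. bernoulli_pmf (q i)))))"
    unfolding cnt_def using assms by (simp add: Pi_pmf_union)
  also have "\<dots> = map_pmf (\<lambda>(f,g). card {i\<in>A. f i} + card {i\<in>B. g i})
             (pair_pmf (Pi_pmf A False (\<lambda>i. bernoulli_pmf (q i))) (Pi_pmf B False (\<lambda>i. bernoulli_pmf (q i))))"
  proof -
    have "card {i\<in>A \<union> B. (if i \<in> A then f i else g i)} = card {i\<in>A. f i} + card {i\<in>B. g i}" for f g
    proof -
      have e: "{i\<in>A \<union> B. (if i \<in> A then f i else g i)} = {i\<in>A. f i} \<union> {i\<in>B. g i}"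
        using assms(3) by auto
      show ?thesis unfolding e using assms by (subst card_Un_disjoint) auto
    qed
    then show ?thesis by (simp add: map_pmf_comp case_prod_unfold)
  qed
  also have "\<dots> = map_pmf (\<lambda>(a,b). a + b) (pair_pmf (cnt q A) (cnt q B))"
    unfolding cnt_def map_pair[symmetric] by (simp add: map_pmf_comp case_prod_unfold)
  finally show ?thesis .
qed

lemma cnt_empty: "cnt q {} = return_pmf 0"
  by (simp add: cnt_def)

lemma cnt_single: "cnt q {x} = map_pmf of_bool (bernoulli_pmf (q x))"
  unfolding cnt_def Pi_pmf_singleton map_pmf_comp
  by (intro map_pmf_cong refl) auto

lemma set_cnt: "finite I \<Longrightarrow> set_pmf (cnt q I) \<subseteq> {..card I}"
  unfolding cnt_def by (auto intro!: card_mono)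

lemma finite_set_cnt: "finite I \<Longrightarrow> finite (set_pmf (cnt q I))"
  using set_cnt finite_subset by blast

lemma integrable_cnt[simp, intro]: "finite I \<Longrightarrow> integrable (measure_pmf (cnt q I)) (f :: nat \<Rightarrow> real)"
  by (intro integrable_measure_pmf_finite finite_set_cnt)

lemma expectation_pair_finite:
  fixes g :: "'a \<times> 'b \<Rightarrow> real"
  assumes "finite (set_pmf A)" "finite (set_pmf B)"
  shows "measure_pmf.expectation (pair_pmf A B) g =
         measure_pmf.expectation A (\<lambda>a. measure_pmf.expectation B (\<lambda>b. g (a, b)))"
proof -
  have "measure_pmf.expectation (pair_pmf A B) g = (\<Sum>x\<in>set_pmf A \<times> set_pmf B. g x * pmf (pair_pmf A B) x)"
    using assms by (intro integral_measure_pmf_real) auto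
  also have "\<dots> = (\<Sum>a\<in>set_pmf A. \<Sum>b\<in>set_pmf B. g (a,b) * (pmf A a * pmf B b))"
    by (subst sum.cartesian_product) (auto intro!: sum.cong simp: pmf_pair)
  also have "\<dots> = (\<Sum>a\<in>set_pmf A. (\<Sum>b\<in>set_pmf B. g (a,b) * pmf B b) * pmf A a)"
    by (simp add: sum_distrib_left sum_distrib_right mult_ac)
  also have "\<dots> = measure_pmf.expectation A (\<lambda>a. measure_pmf.expectation B (\<lambda>b. g (a, b)))"
    using assms by (subst integral_measure_pmf_real[where A="set_pmf A"])
       (auto intro!: sum.cong simp: integral_measure_pmf_real[where A="set_pmf B"])
  finally show ?thesis .
qed

definition cl :: "real \<Rightarrow> real" where "cl p = min 1 (max 0 p)"

interpretation pmf_as_function .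

lemma pmf_bernoulli_cl: "pmf (bernoulli_pmf p) b = (if b then cl p else 1 - cl p)"
  unfolding cl_def by transfer simp

lemma cl_id[simp]: "0 \<le> p \<Longrightarrow> p \<le> 1 \<Longrightarrow> cl p = p"
  by (simp add: cl_def)

lemma cl_bounds: "0 \<le> cl p" "cl p \<le> 1"
  by (auto simp: cl_def)

lemma expectation_cnt_insert:
  fixes f :: "nat \<Rightarrow> real"
  assumes "finite I" "x \<notin> I"
  shows "measure_pmf.expectation (cnt q (insert x I)) f =
     (1 - cl (q x)) * measure_pmf.expectation (cnt q I) f + cl (q x) * measure_pmf.expectation (cnt q I) (\<lambda>k. f (k+1))"
proof -
  have "insert x I = I \<union> {x}" by auto
  then have "cnt q (insert x I) = map_pmf (\<lambda>(a,b). a + b) (pair_pmf (cnt q I) (cnt q {x}))"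
    using assms cnt_union[of I "{x}" q] by auto
  then have "measure_pmf.expectation (cnt q (insert x I)) f =
      measure_pmf.expectation (cnt q I) (\<lambda>a. measure_pmf.expectation (cnt q {x}) (\<lambda>b. f (a + b)))"
    using assms by (simp add: expectation_pair_finite finite_set_cnt case_prod_unfold)
  also have "\<dots> = measure_pmf.expectation (cnt q I) (\<lambda>a. (1 - cl (q x)) * f a + cl (q x) * f (a+1))"
  proof -
    have "measure_pmf.expectation (cnt q {x}) (\<lambda>b. f (a + b)) = (1 - cl (q x)) * f a + cl (q x) * f (a+1)" for a
    proof -
      have "measure_pmf.expectation (cnt q {x}) (\<lambda>b. f (a + b)) = (\<Sum>b\<in>{True,False}. f (a + of_bool b) * pmf (bernoulli_pmf (q x)) b)"
        unfolding cnt_single by (simp, subst integral_measure_pmf_real[where A="{True,False}"]) auto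
      then show ?thesis by (simp add: pmf_bernoulli_cl algebra_simps)
    qed
    then show ?thesis by simp
  qed
  also have "\<dots> = (1 - cl (q x)) * measure_pmf.expectation (cnt q I) f + cl (q x) * measure_pmf.expectation (cnt q I) (\<lambda>k. f (k+1))"
    using assms by (simp add: integral_add)
  finally show ?thesis .
qed


definition mu :: "(nat \<Rightarrow> real) \<Rightarrow> nat set \<Rightarrow> real" where
  "mu q I = (\<Sum>i\<in>I. cl (q i))"
definition Vr :: "(nat \<Rightarrow> real) \<Rightarrow> nat set \<Rightarrow> real" where
  "Vr q I = (\<Sum>i\<in>I. cl (q i) * (1 - cl (q i)))"

abbreviation EC :: "(nat \<Rightarrow> real) \<Rightarrow> nat set \<Rightarrow> (nat \<Rightarrow> real) \<Rightarrow> real" where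
  "EC q I f \<equiv> measure_pmf.expectation (cnt q I) f"

lemma EC_expand:
  assumes "finite I"
  shows "EC q I (\<lambda>c. (Z c + a)^1) = EC q I Z + a"
    "EC q I (\<lambda>c. (Z c + a)^2) = EC q I (\<lambda>c. Z c^2) + 2*a*EC q I Z + a^2"
    "EC q I (\<lambda>c. (Z c + a)^3) = EC q I (\<lambda>c. Z c^3) + 3*a*EC q I (\<lambda>c. Z c^2) + 3*a^2*EC q I Z + a^3"
    "EC q I (\<lambda>c. (Z c + a)^4) = EC q I (\<lambda>c. Z c^4) + 4*a*EC q I (\<lambda>c. Z c^3) + 6*a^2*EC q I (\<lambda>c. Z c^2) + 4*a^3*EC q I Z + a^4"
proof -
  have e1: "\<And>z::real. (z + a)^2 = z^2 + 2*a*z + a^2"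
   and e2: "\<And>z::real. (z + a)^3 = z^3 + 3*a*z^2 + 3*a^2*z + a^3"
   and e3: "\<And>z::real. (z + a)^4 = z^4 + 4*a*z^3 + 6*a^2*z^2 + 4*a^3*z + a^4"
    by (simp_all add: algebra_simps power2_eq_square power3_eq_cube power4_eq_xxxx)
  show "EC q I (\<lambda>c. (Z c + a)^1) = EC q I Z + a"
    using assms by simp
  show "EC q I (\<lambda>c. (Z c + a)^2) = EC q I (\<lambda>c. Z c^2) + 2*a*EC q I Z + a^2"
    using assms unfolding e1 by simp
  show "EC q I (\<lambda>c. (Z c + a)^3) = EC q I (\<lambda>c. Z c^3) + 3*a*EC q I (\<lambda>c. Z c^2) + 3*a^2*EC q I Z + a^3"
    using assms unfolding e2 by simp
  show "EC q I (\<lambda>c. (Z c + a)^4) = EC q I (\<lambda>c. Z c^4) + 4*a*EC q I (\<lambda>c. Z c^3) + 6*a^2*EC q I (\<lambda>c. Z c^2) + 4*a^3*EC q I Z + a^4"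
    using assms unfolding e3 by simp
qed

lemma moments:
  assumes "finite I"
  shows "EC q I (\<lambda>c. real c - mu q I) = 0 \<and>
         EC q I (\<lambda>c. (real c - mu q I)^2) = Vr q I \<and>
         \<bar>EC q I (\<lambda>c. (real c - mu q I)^3)\<bar> \<le> Vr q I \<and>
         EC q I (\<lambda>c. (real c - mu q I)^4) \<le> 3 * (Vr q I)^2 + Vr q I"
  using assms
proof (induction rule: finite_induct)
  case empty
  then show ?case by (simp add: cnt_empty mu_def Vr_def)
next
  case (insert x I)
  define p where "p = cl (q x)"
  have p01: "0 \<le> p" "p \<le> 1" using cl_bounds p_def by auto
  define m where "m = mu q I"
  define V where "V = Vr q I"
  have V0: "0 \<le> V" unfolding V_def Vr_def by (intro sum_nonneg) (simp add: cl_bounds)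
  define Z where "Z = (\<lambda>c::nat. real c - m)"
  have mu': "mu q (insert x I) = m + p" using insert by (simp add: mu_def m_def p_def)
  have V': "Vr q (insert x I) = V + p * (1 - p)" using insert by (simp add: Vr_def V_def p_def)
  note IH = insert.IH[folded m_def V_def]
  have M1: "EC q I Z = 0" and M2: "EC q I (\<lambda>c. Z c^2) = V" and M3: "\<bar>EC q I (\<lambda>c. Z c^3)\<bar> \<le> V"
    and M4: "EC q I (\<lambda>c. Z c^4) \<le> 3 * V^2 + V"
    using IH unfolding Z_def by auto
  have step: "EC q (insert x I) (\<lambda>c. (real c - mu q (insert x I))^k) =
     (1 - p) * EC q I (\<lambda>c. (Z c + (-p))^k) + p * EC q I (\<lambda>c. (Z c + (1-p))^k)" for k
    unfolding mu' using insert by (subst expectation_cnt_insert) (auto simp: Z_def p_def algebra_simps)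
  note ex = EC_expand[OF insert(1), of q Z]
  have "EC q (insert x I) (\<lambda>c. (real c - mu q (insert x I))^1) = 0"
    unfolding step ex M1 by (simp add: algebra_simps)
  moreover have "EC q (insert x I) (\<lambda>c. (real c - mu q (insert x I))^2) = V + p * (1 - p)"
    unfolding step ex M1 M2 by (simp add: algebra_simps power2_eq_square)
  moreover have "EC q (insert x I) (\<lambda>c. (real c - mu q (insert x I))^3) = EC q I (\<lambda>c. Z c^3) + p*(1-p)*(1-2*p)"
    unfolding step ex M1 M2 by (simp add: algebra_simps power2_eq_square power3_eq_cube)
  moreover have "EC q (insert x I) (\<lambda>c. (real c - mu q (insert x I))^4) =
      EC q I (\<lambda>c. Z c^4) + 6 * V * (p*(1-p)) + p*(1-p)*(p^3 + (1-p)^3)"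
    unfolding step ex M1 M2 by (simp add: algebra_simps power2_eq_square power3_eq_cube power4_eq_xxxx)
  moreover have "\<bar>p*(1-p)*(1-2*p)\<bar> \<le> p*(1-p)"
  proof -
    have "\<bar>1-2*p\<bar> \<le> 1" using p01 by auto
    moreover have "0 \<le> p*(1-p)" using p01 by auto
    ultimately show ?thesis by (simp add: abs_mult mult_left_le)
  qed
  moreover have "p*(1-p)*(p^3 + (1-p)^3) \<le> p*(1-p)"
  proof -
    have "p^3 \<le> p" using p01 by (simp add: power_le_one mult_left_le_one_le power3_eq_cube mult_le_one)
    moreover have "(1-p)^3 \<le> 1-p"
    proof -
      have a: "(1-p)*(1-p) \<le> 1" using p01 by (intro mult_le_one) auto
      then have "(1-p)*((1-p)*(1-p)) \<le> (1-p)" using p01 by (intro mult_left_le) auto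
      then show ?thesis by (simp add: power3_eq_cube)
    qed
    ultimately have "p^3 + (1-p)^3 \<le> 1" by simp
    moreover have "0 \<le> p*(1-p)" using p01 by auto
    ultimately show ?thesis by (simp add: mult_left_le)
  qed
  moreover have w0: "0 \<le> p*(1-p)" using p01 by auto
  ultimately show ?case
  proof (intro conjI, goal_cases)
    case 1 then show ?case by simp
  next
    case 2 then show ?case unfolding V' by simp
  next
    case 3 then show ?case unfolding V' using M3 by (simp add: abs_triangle_ineq[THEN order_trans])
  next
    case 4
    have "\<And>w. 0 \<le> w \<Longrightarrow> 3 * V^2 + V + 6 * V * w + w \<le> 3 * (V + w)^2 + (V + w)"
      by (simp add: power2_eq_square algebra_simps)
    from this[OF w0] have "3 * V^2 + V + 6 * V * (p*(1-p)) + p*(1-p) \<le> 3 * (V + p*(1-p))^2 + (V + p*(1-p))" .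
    then show ?case unfolding V' using 4 M4 by linarith
  qed
qed


lemma prob_ge_expect:
  fixes g :: "nat \<Rightarrow> real"
  assumes "finite I" "\<And>c. g c \<le> indicator A c"
  shows "measure_pmf.prob (cnt q I) A \<ge> EC q I g"
proof -
  have "EC q I g \<le> EC q I (indicator A)"
    using assms by (intro integral_mono) auto
  also have "\<dots> = measure_pmf.prob (cnt q I) A" by simp
  finally show ?thesis .
qed

lemma poly_ind:
  fixes z s :: real
  assumes s: "s > 0"
  shows "-((z + s/2) * (z + 10* s) * (z - 2* s)^2) \<le> 3312 * s^4 * indicator {z. z \<le> -s/2} z"
proof (cases "z > -s/2")
  case True
  then have "0 \<le> (z + s/2) * (z + 10* s) * (z - 2* s)^2" using s by (intro mult_nonneg_nonneg) auto
  then show ?thesis using True by simp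
next
  case False
  then have ind: "indicator {z. z \<le> -s/2} z = (1::real)" by simp
  show ?thesis
  proof (cases "z \<le> -10* s")
    case True
    then have "0 \<le> (z + s/2) * (z + 10* s)" using False s by (intro mult_nonpos_nonpos) auto
    then have "0 \<le> (z + s/2) * (z + 10* s) * (z - 2* s)^2" by simp
    moreover have "0 \<le> s^4" using s by simp
    ultimately show ?thesis unfolding ind by linarith
  next
    case F2: False
    define a where "a = -(z + s/2)"
    define b where "b = z + 10* s"
    have a0: "0 \<le> a" and b0: "0 \<le> b" using False F2 by (auto simp: a_def b_def)
    have "a * b \<le> ((a+b)/2)^2"
      using zero_le_square[of "a-b"] by (simp add: power2_eq_square field_simps)
    also have "(a+b)/2 = 19/4 * s" by (simp add: a_def b_def)
    finally have ab: "a * b \<le> (19/4* s)^2" .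
    have "(z - 2* s)^2 \<le> (12* s)^2"
      using False F2 s by (subst abs_le_square_iff[symmetric]) auto
    then have "a * b * (z - 2* s)^2 \<le> (19/4* s)^2 * (12* s)^2"
      using ab a0 b0 by (intro mult_mono) auto
    also have "\<dots> \<le> 3312 * s^4" using s by (simp add: power2_eq_square power4_eq_xxxx)
    finally have "a * b * (z - 2 * s)^2 \<le> 3312 * s^4" .
    moreover have "a * b * (z - 2 * s)^2 = -((z + s/2) * (z + 10 * s) * (z - 2 * s)^2)"
      by (simp add: a_def b_def algebra_simps)
    ultimately show ?thesis unfolding ind by simp
  qed
qed

lemma block_lower:
  assumes "finite I" "Vr q I \<ge> 1"
  shows "measure_pmf.prob (cnt q I) {c. real c \<le> mu q I - sqrt (Vr q I) / 2} \<ge> 1/1500"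
proof -
  define V where "V = Vr q I"
  define s where "s = sqrt V"
  have V1: "V \<ge> 1" using assms V_def by simp
  have s1: "s \<ge> 1" using V1 s_def by simp
  have sV: "s^2 = V" using V1 s_def by simp
  define Z where "Z = (\<lambda>c::nat. real c - mu q I)"
  have M: "EC q I Z = 0" "EC q I (\<lambda>c. Z c^2) = V" "\<bar>EC q I (\<lambda>c. Z c^3)\<bar> \<le> V"
    "EC q I (\<lambda>c. Z c^4) \<le> 3 * V^2 + V"
    using moments[OF assms(1), of q] unfolding Z_def V_def by auto
  define g where "g = (\<lambda>c. -((Z c + s/2) * (Z c + 10* s) * (Z c - 2* s)^2) / (3312 * s^4))"
  have s0: "s > 0" using s1 by simp
  have gi: "g c \<le> indicator {c. real c \<le> mu q I - sqrt (Vr q I) / 2} c" for c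
  proof -
    have "g c \<le> indicator {z. z \<le> -s/2} (Z c)"
    proof -
      have K: "0 < 3312 * s^4" using s0 by simp
      show ?thesis unfolding g_def
        by (subst pos_divide_le_eq[OF K]) (metis mult.commute poly_ind[OF s0])
    qed
    also have "indicator {z. z \<le> -s/2} (Z c) = (indicator {c. real c \<le> mu q I - sqrt (Vr q I) / 2} c :: real)"
      by (simp add: indicator_def Z_def s_def V_def algebra_simps)
    finally show ?thesis .
  qed
  have exp: "(z + s/2) * (z + 10* s) * (z - 2* s)^2 =
      z^4 + 13/2 * s * z^3 + (-33) * s^2 * z^2 + 22 * s^3 * z + 20 * s^4" for z
    by (simp add: power2_eq_square power3_eq_cube power4_eq_xxxx algebra_simps)
  have Eg: "EC q I g = -(EC q I (\<lambda>c. Z c^4) + 13/2 * s * EC q I (\<lambda>c. Z c^3) + (-33) * s^2 * EC q I (\<lambda>c. Z c^2)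
        + 22 * s^3 * EC q I Z + 20 * s^4) / (3312 * s^4)"
    unfolding g_def exp using assms(1) by simp
  have "s * EC q I (\<lambda>c. Z c^3) \<le> s * V"
    using M(3) s0 by (intro mult_left_mono) auto
  also have "s * V \<le> s^4"
  proof -
    have "s \<le> s^2" using s1 by (simp add: power2_eq_square)
    then have "s * V \<le> V * V" using V1 sV by (intro mult_right_mono) auto
    moreover have "s^4 = V * V" using sV by (simp add: power4_eq_xxxx power2_eq_square[symmetric] mult.assoc)
    ultimately show ?thesis by simp
  qed
  finally have m3: "s * EC q I (\<lambda>c. Z c^3) \<le> s^4" .
  have m4: "EC q I (\<lambda>c. Z c^4) \<le> 4 * s^4"
  proof -
    have "V \<le> V^2" using V1 by (simp add: power2_eq_square)
    moreover have "V^2 = s^4" using sV by (simp add: power2_eq_square power4_eq_xxxx)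
    ultimately show ?thesis using M(4) by simp
  qed
  have s2V: "s^2 * V = s^4" using sV by (simp add: power2_eq_square power4_eq_xxxx)
  have num: "EC q I (\<lambda>c. Z c^4) + 13/2 * (s * EC q I (\<lambda>c. Z c^3)) + (-33) * (s^2 * V) + 20 * s^4 \<le> -(5/2 * s^4)"
    using m3 m4 s2V by linarith
  have Eg2: "EC q I g = -(EC q I (\<lambda>c. Z c^4) + 13/2 * (s * EC q I (\<lambda>c. Z c^3)) + (-33) * (s^2 * V) + 20 * s^4) / (3312 * s^4)"
    unfolding Eg M(1) M(2) by (simp add: mult.assoc)
  have "EC q I g \<ge> (5/2 * s^4) / (3312 * s^4)"
    unfolding Eg2 using num s0 by (intro divide_right_mono) auto
  also have "(5/2 * s^4) / (3312 * s^4) = 5/6624" using s0 by simp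
  finally have "EC q I g \<ge> 5/6624" .
  moreover have "measure_pmf.prob (cnt q I) {c. real c \<le> mu q I - sqrt (Vr q I) / 2} \<ge> EC q I g"
    using assms(1) gi by (rule prob_ge_expect)
  ultimately show ?thesis by simp
qed

lemma cheb_lower:
  assumes "finite I" "t > 0"
  shows "measure_pmf.prob (cnt q I) {c. real c \<le> mu q I + t} \<ge> 1 - Vr q I / t^2"
proof -
  define Z where "Z = (\<lambda>c::nat. real c - mu q I)"
  have M2: "EC q I (\<lambda>c. Z c^2) = Vr q I"
    using moments[OF assms(1), of q] unfolding Z_def by auto
  define g where "g = (\<lambda>c. 1 - Z c^2 / t^2)"
  have gi: "g c \<le> indicator {c. real c \<le> mu q I + t} c" for c
  proof (cases "real c \<le> mu q I + t")
    case True then show ?thesis using assms by (simp add: g_def)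
  next
    case False
    then have "t \<le> Z c" by (simp add: Z_def)
    then have "t^2 \<le> Z c^2" using assms by (intro power_mono) auto
    then show ?thesis using False assms by (simp add: g_def)
  qed
  have "EC q I g = 1 - Vr q I / t^2" unfolding g_def using assms M2 by simp
  then show ?thesis using prob_ge_expect[where q=q, OF assms(1) gi] by simp
qed

lemma union_lower:
  assumes "finite A" "finite B" "A \<inter> B = {}"
  shows "measure_pmf.prob (cnt q (A \<union> B)) {c. real c \<le> x + y} \<ge>
    measure_pmf.prob (cnt q A) {c. real c \<le> x} * measure_pmf.prob (cnt q B) {c. real c \<le> y}"
proof -
  have "measure_pmf.prob (cnt q A) {c. real c \<le> x} * measure_pmf.prob (cnt q B) {c. real c \<le> y} =
     measure_pmf.prob (pair_pmf (cnt q A) (cnt q B)) ({c. real c \<le> x} \<times> {c. real c \<le> y})"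
    by (simp add: measure_pmf_prob_product)
  also have "\<dots> \<le> measure_pmf.prob (pair_pmf (cnt q A) (cnt q B)) ((\<lambda>(a,b). a + b) -` {c. real c \<le> x + y})"
    by (intro measure_pmf.finite_measure_mono) auto
  also have "\<dots> = measure_pmf.prob (cnt q (A \<union> B)) {c. real c \<le> x + y}"
    using assms by (simp add: cnt_union)
  finally show ?thesis .
qed

lemma family_lower:
  assumes "finite J" "\<And>j. j \<in> J \<Longrightarrow> finite (B j)" "disjoint_family_on B J"
  shows "measure_pmf.prob (cnt q (\<Union>j\<in>J. B j)) {c. real c \<le> (\<Sum>j\<in>J. x j)} \<ge>
    (\<Prod>j\<in>J. measure_pmf.prob (cnt q (B j)) {c. real c \<le> x j})"
  using assms
proof (induction rule: finite_induct)
  case empty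
  then show ?case by (simp add: cnt_empty)
next
  case (insert j J)
  have d: "disjoint_family_on B J" using insert(5) by (auto simp: disjoint_family_on_def)
  have IH: "measure_pmf.prob (cnt q (\<Union>j\<in>J. B j)) {c. real c \<le> (\<Sum>j\<in>J. x j)} \<ge>
    (\<Prod>j\<in>J. measure_pmf.prob (cnt q (B j)) {c. real c \<le> x j})"
    using insert d by auto
  have disj: "B j \<inter> (\<Union>j\<in>J. B j) = {}"
    using insert(2,5) by (auto simp: disjoint_family_on_def)
  have "(\<Prod>j\<in>insert j J. measure_pmf.prob (cnt q (B j)) {c. real c \<le> x j}) =
      measure_pmf.prob (cnt q (B j)) {c. real c \<le> x j} * (\<Prod>j\<in>J. measure_pmf.prob (cnt q (B j)) {c. real c \<le> x j})"
    using insert by simp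
  also have "\<dots> \<le> measure_pmf.prob (cnt q (B j)) {c. real c \<le> x j} * measure_pmf.prob (cnt q (\<Union>j\<in>J. B j)) {c. real c \<le> (\<Sum>j\<in>J. x j)}"
    using IH by (intro mult_left_mono) auto
  also have "\<dots> \<le> measure_pmf.prob (cnt q (B j \<union> (\<Union>j\<in>J. B j))) {c. real c \<le> x j + (\<Sum>j\<in>J. x j)}"
    using insert disj by (intro union_lower) auto
  finally show ?case using insert by simp
qed


lemma majority_prob_cnt:
  "majority_prob q n = 1 - measure_pmf.prob (cnt q {..<n}) {c. real c \<le> real n / 2}"
proof -
  have "majority_prob q n = measure_pmf.prob (cnt q {..<n}) {c. real c > real n / 2}"
    unfolding majority_prob_def cnt_def by simp
  also have "{c. real c > real n / 2} = UNIV - {c. real c \<le> real n / 2}" by auto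
  also have "measure_pmf.prob (cnt q {..<n}) \<dots> = 1 - measure_pmf.prob (cnt q {..<n}) {c. real c \<le> real n / 2}"
    by (subst measure_pmf.prob_compl[symmetric]) auto
  finally show ?thesis .
qed

lemma Vr_le: "finite I \<Longrightarrow> Vr q I \<le> card I / 4"
proof -
  assume "finite I"
  have "Vr q I \<le> (\<Sum>i\<in>I. 1/4)" unfolding Vr_def
  proof (intro sum_mono)
    fix i
    have "cl (q i) * (1 - cl (q i)) = 1/4 - (cl (q i) - 1/2)^2" by (simp add: power2_eq_square algebra_simps)
    then show "cl (q i) * (1 - cl (q i)) \<le> 1/4" by simp
  qed
  then show ?thesis by simp
qed

lemma Vr_nonneg: "0 \<le> Vr q I"
  unfolding Vr_def by (intro sum_nonneg) (simp add: cl_bounds)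

lemma blocks_union: "(\<Union>j<M. {j*L..<(Suc j)*L}) = {..<M*(L::nat)}"
proof
  show "(\<Union>j<M. {j*L..<(Suc j)*L}) \<subseteq> {..<M*L}"
  proof
    fix x assume "x \<in> (\<Union>j<M. {j*L..<(Suc j)*L})"
    then obtain j where "j < M" "x < Suc j * L" by auto
    moreover have "Suc j * L \<le> M * L" using \<open>j < M\<close> by (intro mult_le_mono1) auto
    ultimately show "x \<in> {..<M*L}" by auto
  qed
next
  show "{..<M*L} \<subseteq> (\<Union>j<M. {j*L..<(Suc j)*L})"
  proof
    fix x assume x: "x \<in> {..<M*L}"
    then have L0: "L > 0" by (cases L) auto
    define j where "j = x div L"
    have "j < M" using x L0 unfolding j_def by (simp add: div_less_iff_less_mult mult.commute)
    moreover have "j * L \<le> x" unfolding j_def by (simp add: div_times_less_eq_dividend)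
    moreover have "x < Suc j * L" unfolding j_def using dividend_less_div_times[OF L0, of x] by simp
    ultimately show "x \<in> (\<Union>j<M. {j*L..<(Suc j)*L})" by auto
  qed
qed

lemma blocks_disj: "disjoint_family_on (\<lambda>j. {j*L..<(Suc j)*(L::nat)}) J"
  unfolding disjoint_family_on_def
proof (intro ballI impI)
  fix a b :: nat assume "a \<noteq> b"
  then consider "a < b" | "b < a" by linarith
  then show "{a*L..<Suc a*L} \<inter> {b*L..<Suc b*L} = {}"
  proof cases
    case 1
    then have "Suc a * L \<le> b * L" by (intro mult_le_mono1) auto
    then show ?thesis by auto
  next
    case 2
    then have "Suc b * L \<le> a * L" by (intro mult_le_mono1) auto
    then show ?thesis by auto
  qed
qed


lemma sum_UN_blocks:
  fixes f :: "nat \<Rightarrow> real"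
  assumes "finite J"
  shows "sum f (\<Union>j\<in>J. {j*L..<(Suc j)*L}) = (\<Sum>j\<in>J. sum f {j*L..<(Suc j)*L})"
  using blocks_disj[of L J] assms
  by (intro sum.UNION_disjoint) (auto simp: disjoint_family_on_def)

lemma D_main:
  fixes C c :: real
  assumes c: "c > 0"
  obtains \<delta> N0 where "\<delta> > 0"
    "\<And>q n. n \<ge> N0 \<Longrightarrow> (\<And>i. 0 \<le> q i \<and> q i \<le> 1) \<Longrightarrow> (\<Sum>i<n. q i) \<le> real n / 2 + C * sqrt (real n) \<Longrightarrow>
        c * real n \<le> (\<Sum>i<n. q i * (1 - q i)) \<Longrightarrow> majority_prob q n \<le> 1 - \<delta>"
proof -
  define C' where "C' = max C 0"
  define M :: nat where "M = nat \<lceil>16 * (C' + 2)^2 / c^3\<rceil> + 1"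
  define K :: nat where "K = nat \<lceil>2 / c\<rceil> + 2"
  define \<delta> :: real where "\<delta> = (1/1500)^M * (3/4)"
  have C'0: "C' \<ge> 0" "C \<le> C'" by (auto simp: C'_def)
  have M1: "M \<ge> 1" by (simp add: M_def)
  have Mbig: "real M \<ge> 16 * (C' + 2)^2 / c^3"
    unfolding M_def by linarith
  have Kc: "real K \<ge> 2 / c" "K \<ge> 2" unfolding K_def by linarith+
  have "\<delta> > 0" by (simp add: \<delta>_def)
  moreover have "majority_prob q n \<le> 1 - \<delta>"
    if n: "n \<ge> M * K" and q01: "\<And>i. 0 \<le> q i \<and> q i \<le> 1"
      and qmu: "(\<Sum>i<n. q i) \<le> real n / 2 + C * sqrt (real n)"
      and qV: "c * real n \<le> (\<Sum>i<n. q i * (1 - q i))" for q n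
  proof -
    define L where "L = n div M"
    have LK: "L \<ge> K"
    proof -
      have "(M*K) div M \<le> n div M" by (rule div_le_mono[OF n])
      moreover have "(M*K) div M = K" using M1 by simp
      ultimately show ?thesis by (simp add: L_def)
    qed
    have L2c: "real L \<ge> 2 / c" using LK Kc by linarith
    have L1c: "c * real L \<ge> 1"
    proof -
      have "2 / c \<le> real L" by (rule L2c)
      then have "2 \<le> c * real L" using c by (simp add: divide_le_eq mult.commute)
      then show ?thesis by simp
    qed
    have Lpos: "L \<ge> 1" using LK Kc by linarith
    have MLn: "M * L \<le> n" unfolding L_def by (simp add: times_div_less_eq_dividend)
    have nML: "n < M * L + M"
    proof -
      have "n mod M < M" using M1 by simp
      moreover have "M * L + n mod M = n" unfolding L_def by (rule mult_div_mod_eq)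
      ultimately show ?thesis by linarith
    qed
    have n1: "n \<ge> 1"
    proof -
      have "1 \<le> M * K" using M1 Kc by simp
      then show ?thesis using n by linarith
    qed
    have Ln: "real n \<le> 2 * real M * real L"
    proof -
      have "real n < real M * real L + real M" using nML by (metis of_nat_add of_nat_less_iff of_nat_mult)
      also have "\<dots> \<le> real M * real L + real M * real L"
      proof -
        have "real M * 1 \<le> real M * real L" using Lpos by (intro mult_left_mono) auto
        then show ?thesis by (simp add: mult.commute)
      qed
      finally show ?thesis by (simp add: algebra_simps)
    qed
    have cl_q: "cl (q i) = q i" for i using q01[of i] by simp
    have muq: "mu q I = (\<Sum>i\<in>I. q i)" for I unfolding mu_def cl_q ..
    have Vq: "Vr q I = (\<Sum>i\<in>I. q i * (1 - q i))" for I unfolding Vr_def cl_q ..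
    define B where "B = (\<lambda>j. {j*L..<(Suc j)*L})"
    have cardB: "card (B j) = L" for j unfolding B_def by simp
    have finB: "finite (B j)" for j unfolding B_def by simp
    have disjB: "disjoint_family_on B J" for J unfolding B_def by (rule blocks_disj)
    define G where "G = {j\<in>{..<M}. Vr q (B j) \<ge> c * real L / 2}"
    have finG: "finite G" unfolding G_def by simp
    have GM: "card G \<le> M"
    proof -
      have "card G \<le> card {..<M}" by (rule card_mono) (auto simp: G_def)
      then show ?thesis by simp
    qed
    define g where "g = real (card G)"
    have UB: "(\<Union>j<M. B j) = {..<M*L}" unfolding B_def by (rule blocks_union)
    have sumB: "(\<Sum>j<M. Vr q (B j)) = Vr q {..<M*L}"
      unfolding UB[symmetric] Vr_def B_def by (rule sum_UN_blocks[symmetric]) simp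
    have split_n: "{..<n} = {..<M*L} \<union> {M*L..<n}" using MLn by auto
    have "Vr q {..<n} = Vr q {..<M*L} + Vr q {M*L..<n}"
      unfolding Vr_def by (subst split_n, rule sum.union_disjoint) auto
    moreover have "Vr q {M*L..<n} \<le> real M / 4"
    proof -
      have "Vr q {M*L..<n} \<le> card {M*L..<n} / 4" by (rule Vr_le) simp
      also have "card {M*L..<n} \<le> M" using nML by simp
      finally show ?thesis by (simp add: divide_right_mono)
    qed
    moreover have "Vr q {..<n} \<ge> c * real n" using qV Vq by simp
    ultimately have sumB_lo: "(\<Sum>j<M. Vr q (B j)) \<ge> c * real n - real M / 4" unfolding sumB by linarith
    have "(\<Sum>j<M. Vr q (B j)) = (\<Sum>j\<in>G. Vr q (B j)) + (\<Sum>j\<in>{..<M} - G. Vr q (B j))"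
      by (subst sum.subset_diff[of G]) (auto simp: G_def)
    also have "(\<Sum>j\<in>G. Vr q (B j)) \<le> (\<Sum>j\<in>G. real L / 4)"
      using Vr_le[OF finB] cardB by (intro sum_mono) auto
    also have "(\<Sum>j\<in>{..<M} - G. Vr q (B j)) \<le> (\<Sum>j\<in>{..<M} - G. c * real L / 2)"
      by (intro sum_mono) (auto simp: G_def)
    also have "(\<Sum>j\<in>{..<M} - G. c * real L / 2) \<le> (\<Sum>j\<in>{..<M}. c * real L / 2)"
      using c by (intro sum_mono2) auto
    finally have "c * real n - real M / 4 \<le> g * real L / 4 + real M * (c * real L / 2)"
      using sumB_lo by (simp add: g_def)
    moreover have "c * (real M * real L) \<le> c * real n"
      using MLn c by (metis mult_left_mono of_nat_le_iff of_nat_mult less_imp_le)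
    ultimately have "g * real L \<ge> 2 * c * real M * real L - real M" by (simp add: algebra_simps)
    moreover have "real M \<le> c * real M * real L"
    proof -
      have "real M * 1 \<le> real M * (c * real L)" using L1c by (intro mult_left_mono) auto
      then show ?thesis by (simp add: algebra_simps)
    qed
    ultimately have "g * real L \<ge> (c * real M) * real L" by (simp add: algebra_simps)
    then have gcM: "g \<ge> c * real M" using Lpos by simp
    define U where "U = (\<Union>j\<in>G. B j)"
    define R where "R = {..<n} - U"
    have UL: "U \<subseteq> {..<n}"
    proof -
      have "U \<subseteq> (\<Union>j<M. B j)" unfolding U_def G_def by auto
      also have "\<dots> \<subseteq> {..<n}" unfolding UB using MLn by auto
      finally show ?thesis .
    qed
    have finU: "finite U" unfolding U_def using finG finB by auto
    have finR: "finite R" unfolding R_def by simp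
    have UR: "U \<union> R = {..<n}" "U \<inter> R = {}" using UL unfolding R_def by auto
    have mu_split: "mu q {..<n} = (\<Sum>j\<in>G. mu q (B j)) + mu q R"
    proof -
      have "mu q {..<n} = mu q U + mu q R" unfolding mu_def UR(1)[symmetric]
        by (rule sum.union_disjoint) (use finU finR UR in auto)
      moreover have "mu q U = (\<Sum>j\<in>G. mu q (B j))" unfolding U_def mu_def B_def
        by (rule sum_UN_blocks) (rule finG)
      ultimately show ?thesis by simp
    qed
    define x where "x = (\<lambda>j. mu q (B j) - sqrt (Vr q (B j)) / 2)"
    define t where "t = 2 * sqrt (Vr q R) + 1"
    have t0: "t > 0" unfolding t_def using real_sqrt_ge_zero[OF Vr_nonneg[of q R]] by linarith
    have P1: "measure_pmf.prob (cnt q U) {c. real c \<le> (\<Sum>j\<in>G. x j)} \<ge> (1/1500)^M"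
    proof -
      have "(1/1500::real)^M \<le> (1/1500)^(card G)" using GM by (intro power_decreasing) auto
      also have "\<dots> = (\<Prod>j\<in>G. 1/1500)" by simp
      also have "\<dots> \<le> (\<Prod>j\<in>G. measure_pmf.prob (cnt q (B j)) {c. real c \<le> x j})"
      proof (intro prod_mono conjI)
        fix j assume "j \<in> G"
        then have "Vr q (B j) \<ge> c * real L / 2" by (simp add: G_def)
        moreover have "c * real L / 2 \<ge> 1" using L2c c by (simp add: divide_le_eq mult.commute)
        ultimately have "Vr q (B j) \<ge> 1" by linarith
        then show "1/1500 \<le> measure_pmf.prob (cnt q (B j)) {c. real c \<le> x j}"
          unfolding x_def by (intro block_lower finB)
      qed simp
      also have "\<dots> \<le> measure_pmf.prob (cnt q U) {c. real c \<le> (\<Sum>j\<in>G. x j)}"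
        unfolding U_def by (intro family_lower finG finB disjB)
      finally show ?thesis .
    qed
    have VR: "Vr q R \<le> real n / 4"
    proof -
      have "Vr q R \<le> card R / 4" using finR by (rule Vr_le)
      also have "card R \<le> n"
      proof -
        have "card R \<le> card {..<n}" by (rule card_mono) (auto simp: R_def)
        then show ?thesis by simp
      qed
      finally show ?thesis by (simp add: divide_right_mono)
    qed
    have P2: "measure_pmf.prob (cnt q R) {c. real c \<le> mu q R + t} \<ge> 3/4"
    proof -
      have "Vr q R / t^2 \<le> 1/4"
      proof -
        have "4 * Vr q R \<le> t^2" unfolding t_def using Vr_nonneg[of q R]
          by (simp add: power2_eq_square algebra_simps)
        then show ?thesis using t0 by (simp add: divide_le_eq)
      qed
      then show ?thesis using cheb_lower[OF finR t0, of q] by linarith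
    qed
    have P12: "measure_pmf.prob (cnt q {..<n}) {c. real c \<le> (\<Sum>j\<in>G. x j) + (mu q R + t)} \<ge> (1/1500)^M * (3/4)"
    proof -
      have "(1/1500)^M * (3/4) \<le> measure_pmf.prob (cnt q U) {c. real c \<le> (\<Sum>j\<in>G. x j)} * measure_pmf.prob (cnt q R) {c. real c \<le> mu q R + t}"
        using P1 P2 by (intro mult_mono) auto
      also have "\<dots> \<le> measure_pmf.prob (cnt q (U \<union> R)) {c. real c \<le> (\<Sum>j\<in>G. x j) + (mu q R + t)}"
        by (intro union_lower finU finR UR)
      finally show ?thesis unfolding UR .
    qed
    have sq_good: "(\<Sum>j\<in>G. sqrt (Vr q (B j)) / 2) \<ge> (C' + 2) * sqrt (real n)"
    proof -
      have "(\<Sum>j\<in>G. sqrt (c * real L / 2) / 2) \<le> (\<Sum>j\<in>G. sqrt (Vr q (B j)) / 2)"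
        by (intro sum_mono divide_right_mono real_sqrt_le_mono) (auto simp: G_def)
      moreover have "(\<Sum>j\<in>G. sqrt (c * real L / 2) / 2) = sqrt (g^2 * (c * real L / 8))"
      proof -
        have "sqrt (g^2 * (c * real L / 8)) = sqrt (g^2) * sqrt (c * real L / 8)"
          by (rule real_sqrt_mult)
        also have "sqrt (g^2) = g" by (simp add: g_def)
        finally have "sqrt (g^2 * (c * real L / 8)) = g * sqrt (c * real L / 8)" .
        also have "sqrt (c * real L / 8) = sqrt (c * real L / 2) / 2"
        proof -
          have "c * real L / 8 = (c * real L / 2) / 4" by simp
          moreover have "sqrt 4 = (2::real)" by (rule real_sqrt_unique) auto
          ultimately show ?thesis by (simp only: real_sqrt_divide)
        qed
        finally show ?thesis by (simp add: g_def)
      qed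
      moreover have "(C' + 2) * sqrt (real n) = sqrt ((C' + 2)^2 * real n)"
        using C'0 by (simp add: real_sqrt_mult)
      moreover have "(C' + 2)^2 * real n \<le> g^2 * (c * real L / 8)"
      proof -
        have "(C' + 2)^2 \<le> real M * c^3 / 16" using Mbig c by (simp add: divide_le_eq mult.commute)
        then have "(C' + 2)^2 * real n \<le> (real M * c^3 / 16) * real n" by (intro mult_right_mono) auto
        also have "\<dots> = (c * real M)^2 * (c * (real n / (2 * real M)) / 8)" using M1
          by (simp add: power2_eq_square power3_eq_cube field_simps)
        also have "\<dots> \<le> g^2 * (c * real L / 8)"
        proof (intro mult_mono power_mono)
          show "c * real M \<le> g" by (rule gcM)
          show "c * (real n / (2 * real M)) / 8 \<le> c * real L / 8"
            using Ln M1 c by (intro divide_right_mono mult_left_mono) (auto simp: divide_le_eq mult.commute)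
        qed (use c in auto)
        finally show ?thesis .
      qed
      ultimately show ?thesis using real_sqrt_le_mono[of "(C' + 2)^2 * real n" "g^2 * (c * real L / 8)"]
        by linarith
    qed
    have t_le: "t \<le> 2 * sqrt (real n)"
    proof -
      have "sqrt (Vr q R) \<le> sqrt (real n / 4)" using VR by (rule real_sqrt_le_mono)
      also have "sqrt (real n / 4) = sqrt (real n) / 2"
      proof -
        have "sqrt 4 = (2::real)" by (rule real_sqrt_unique) auto
        then show ?thesis by (simp only: real_sqrt_divide)
      qed
      finally have "2 * sqrt (Vr q R) \<le> sqrt (real n)" by simp
      moreover have "1 \<le> sqrt (real n)" using n1 by simp
      ultimately show ?thesis unfolding t_def by linarith
    qed
    have thr: "(\<Sum>j\<in>G. x j) + (mu q R + t) \<le> real n / 2"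
    proof -
      have "(\<Sum>j\<in>G. x j) + (mu q R + t) = mu q {..<n} - (\<Sum>j\<in>G. sqrt (Vr q (B j)) / 2) + t"
        unfolding mu_split x_def by (simp add: sum_subtractf)
      also have "mu q {..<n} \<le> real n / 2 + C' * sqrt (real n)"
      proof -
        have "C * sqrt (real n) \<le> C' * sqrt (real n)" using C'0 by (intro mult_right_mono) auto
        then show ?thesis using qmu muq[of "{..<n}"] by linarith
      qed
      finally show ?thesis using sq_good t_le by (simp add: algebra_simps)
    qed
    have "measure_pmf.prob (cnt q {..<n}) {c. real c \<le> real n / 2} \<ge> \<delta>"
    proof -
      have "measure_pmf.prob (cnt q {..<n}) {c. real c \<le> (\<Sum>j\<in>G. x j) + (mu q R + t)}
          \<le> measure_pmf.prob (cnt q {..<n}) {c. real c \<le> real n / 2}"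
        using thr by (intro measure_pmf.finite_measure_mono) auto
      then show ?thesis using P12 unfolding \<delta>_def by linarith
    qed
    then show ?thesis unfolding majority_prob_cnt by simp
  qed
  ultimately show ?thesis using that by blast
qed


definition W :: "nat \<Rightarrow> (nat \<Rightarrow> bool) set" where
  "W n = PiE_dflt {..<n} False (\<lambda>_. UNIV)"

definition wt :: "(nat \<Rightarrow> real) \<Rightarrow> nat \<Rightarrow> (nat \<Rightarrow> bool) \<Rightarrow> real" where
  "wt q n X = (\<Prod>i<n. (if X i then cl (q i) else 1 - cl (q i)))"

lemma finite_W: "finite (W n)"
  unfolding W_def by (intro finite_PiE_dflt) auto

lemma majority_prob_formula:
  "majority_prob q n = (\<Sum>X\<in>W n. (if real (card {i\<in>{..<n}. X i}) > real n / 2 then 1 else 0) * wt q n X)"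
proof -
  define P where "P = Pi_pmf {..<n} False (\<lambda>i. bernoulli_pmf (q i))"
  define E where "E = {X::nat\<Rightarrow>bool. real (card {i\<in>{..<n}. X i}) > real n / 2}"
  have sP: "set_pmf P \<subseteq> W n" unfolding P_def W_def
    using set_Pi_pmf_subset[of "{..<n}" False] by (auto simp: PiE_dflt_def)
  have "majority_prob q n = measure_pmf.prob P E" unfolding majority_prob_def P_def E_def ..
  also have "\<dots> = measure_pmf.prob P (E \<inter> set_pmf P)" by (simp add: measure_Int_set_pmf)
  also have "E \<inter> set_pmf P = (E \<inter> W n) \<inter> set_pmf P" using sP by auto
  also have "measure_pmf.prob P \<dots> = measure_pmf.prob P (E \<inter> W n)" by (simp add: measure_Int_set_pmf)
  also have "\<dots> = sum (pmf P) (E \<inter> W n)"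
    using finite_W by (intro measure_measure_pmf_finite) auto
  also have "E \<inter> W n = {X\<in>W n. X \<in> E}" by auto
  also have "sum (pmf P) \<dots> = (\<Sum>X\<in>W n. if X \<in> E then pmf P X else 0)"
    using finite_W by (rule sum.inter_filter)
  also have "\<dots> = (\<Sum>X\<in>W n. (if real (card {i\<in>{..<n}. X i}) > real n / 2 then 1 else 0) * wt q n X)"
  proof (intro sum.cong refl)
    fix X assume X: "X \<in> W n"
    have "pmf P X = wt q n X" unfolding P_def wt_def
      using X by (subst pmf_Pi') (auto simp: W_def PiE_dflt_def pmf_bernoulli_cl)
    then show "(if X \<in> E then pmf P X else 0) = (if real (card {i\<in>{..<n}. X i}) > real n / 2 then 1 else 0) * wt q n X"
      by (simp add: E_def)
  qed
  finally show ?thesis .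
qed

lemma borel_measurable_cl[measurable]: "cl \<in> borel_measurable borel"
  unfolding cl_def by measurable

lemma majority_prob_measurable:
  assumes [measurable]: "\<And>i. (\<lambda>p. f p i) \<in> borel_measurable M"
  shows "(\<lambda>p. majority_prob (f p) n) \<in> borel_measurable M"
  unfolding majority_prob_formula wt_def by measurable

lemma majority_prob_mono:
  assumes "\<And>i. cl (q i) \<le> cl (q' i)"
  shows "majority_prob q n \<le> majority_prob q' n"
proof -
  have main: "EC q I (indicator {k. real k > t}) \<le> EC q' I (indicator {k. real k > t})"
    if "finite I" for I t
    using that
  proof (induction I arbitrary: t rule: finite_induct)
    case empty
    then show ?case by (simp add: cnt_empty)
  next
    case (insert x I)
    define A where "A = EC q I (indicator {k. real k > t})"
    define A' where "A' = EC q I (\<lambda>k. indicator {k. real k > t} (k+1))"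
    define B where "B = EC q' I (indicator {k. real k > t})"
    define B' where "B' = EC q' I (\<lambda>k. indicator {k. real k > t} (k+1))"
    have AB: "A \<le> B" using insert.IH[of t] by (simp add: A_def B_def)
    have "(\<lambda>k. indicator {k. real k > t} (k+1) :: real) = indicator {k. real k > t - 1}"
      by (auto simp: indicator_def fun_eq_iff)
    then have AB': "A' \<le> B'" using insert.IH[of "t-1"] by (simp add: A'_def B'_def)
    have AA': "A \<le> A'" unfolding A_def A'_def using insert.hyps
      by (intro integral_mono) (auto simp: indicator_def)
    define p where "p = cl (q x)"
    define p' where "p' = cl (q' x)"
    have pp: "0 \<le> p" "p \<le> p'" "p' \<le> 1" using assms[of x] cl_bounds by (auto simp: p_def p'_def)
    have "EC q (insert x I) (indicator {k. real k > t}) = (1 - p) * A + p * A'"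
      using insert.hyps by (subst expectation_cnt_insert) (auto simp: A_def A'_def p_def)
    also have "\<dots> \<le> (1 - p') * A + p' * A'"
    proof -
      have "0 \<le> (p' - p) * (A' - A)" using pp AA' by simp
      then show ?thesis by (simp add: algebra_simps)
    qed
    also have "\<dots> \<le> (1 - p') * B + p' * B'"
      using pp AB AB' by (intro add_mono mult_left_mono) auto
    also have "\<dots> = EC q' (insert x I) (indicator {k. real k > t})"
      using insert.hyps by (subst expectation_cnt_insert) (auto simp: B_def B'_def p'_def)
    finally show ?case .
  qed
  have eq: "majority_prob r n = EC r {..<n} (indicator {k. real k > real n / 2})" for r
    unfolding majority_prob_def cnt_def by simp
  show ?thesis unfolding eq by (rule main) simp
qed


definition upk :: "nat \<Rightarrow> (nat \<Rightarrow> real) \<Rightarrow> nat \<Rightarrow> real" where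
  "upk k p = (\<lambda>i. if i < k then 1 else p i)"

context
  fixes \<nu> :: "nat \<Rightarrow> real measure"
  assumes prob: "\<And>i. prob_space (\<nu> i)"
    and sets: "\<And>i. sets (\<nu> i) = sets borel"
    and supp: "\<And>i. AE x in \<nu> i. x \<in> {0..1}"
begin

lemma pps: "product_prob_space \<nu>"
  unfolding product_prob_space_def product_prob_space_axioms_def product_sigma_finite_def
  using prob prob_space_imp_sigma_finite by blast

lemma meas_comp: "(\<lambda>p. p i) \<in> borel_measurable (PiM UNIV \<nu>)"
proof -
  have "(\<lambda>p. p i) \<in> measurable (PiM UNIV \<nu>) (\<nu> i)" by (rule measurable_component_singleton) simp
  moreover have "measurable (PiM UNIV \<nu>) (\<nu> i) = measurable (PiM UNIV \<nu>) borel"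
    by (rule measurable_cong_sets[OF refl sets])
  ultimately show ?thesis by simp
qed

lemma meas_nu_borel: assumes "f \<in> borel_measurable borel" shows "f \<in> borel_measurable (\<nu> i)"
  by (subst measurable_cong_sets[OF sets[of i] refl]) (rule assms)

lemma integral_prod_comp:
  fixes \<phi> :: "nat \<Rightarrow> real \<Rightarrow> real"
  assumes J: "finite J" and meas: "\<And>i. \<phi> i \<in> borel_measurable borel"
    and bnd: "\<And>i x. \<bar>\<phi> i x\<bar> \<le> 1"
  shows "(\<integral>p. (\<Prod>i\<in>J. \<phi> i (p i)) \<partial>PiM UNIV \<nu>) = (\<Prod>i\<in>J. \<integral>x. \<phi> i x \<partial>\<nu> i)"
proof -
  interpret P: product_prob_space \<nu> UNIV by (rule pps)
  have m2: "(\<lambda>x. \<Prod>i\<in>J. \<phi> i (x i)) \<in> borel_measurable (PiM J \<nu>)"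
  proof (intro borel_measurable_prod)
    fix i assume "i \<in> J"
    have "(\<lambda>x. x i) \<in> measurable (PiM J \<nu>) (\<nu> i)" using \<open>i \<in> J\<close> by (rule measurable_component_singleton)
    moreover have "\<phi> i \<in> measurable (\<nu> i) borel" using meas_nu_borel[OF meas] .
    ultimately show "(\<lambda>x. \<phi> i (x i)) \<in> borel_measurable (PiM J \<nu>)" by (rule measurable_compose)
  qed
  have "(\<integral>p. (\<Prod>i\<in>J. \<phi> i (p i)) \<partial>PiM UNIV \<nu>) = (\<integral>p. (\<lambda>x. \<Prod>i\<in>J. \<phi> i (x i)) (restrict p J) \<partial>PiM UNIV \<nu>)"
    by (intro Bochner_Integration.integral_cong refl prod.cong) auto
  also have "\<dots> = integral\<^sup>L (distr (PiM UNIV \<nu>) (PiM J \<nu>) (\<lambda>p. restrict p J)) (\<lambda>x. \<Prod>i\<in>J. \<phi> i (x i))"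
    by (rule integral_distr[symmetric, OF measurable_restrict_subset m2]) simp
  also have "distr (PiM UNIV \<nu>) (PiM J \<nu>) (\<lambda>p. restrict p J) = PiM J \<nu>"
    using J by (intro P.distr_PiM_restrict_finite) auto
  also have "integral\<^sup>L (PiM J \<nu>) (\<lambda>x. \<Prod>i\<in>J. \<phi> i (x i)) = (\<Prod>i\<in>J. \<integral>x. \<phi> i x \<partial>\<nu> i)"
  proof (rule P.product_integral_prod[OF J])
    fix i
    show "integrable (\<nu> i) (\<phi> i)"
      by (rule finite_measure.integrable_const_bound[where B=1, OF prob_space.finite_measure[OF prob]])
         (auto simp: bnd meas_nu_borel[OF meas])
  qed
  finally show ?thesis .
qed

definition m :: "nat \<Rightarrow> real" where "m i = (\<integral>x. x \<partial>\<nu> i)"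

lemma int_id: "integrable (\<nu> i) (\<lambda>x. x)"
proof -
  interpret prob_space "\<nu> i" by (rule prob)
  have "AE x in \<nu> i. norm x \<le> 1" using supp[of i] by eventually_elim auto
  moreover have "(\<lambda>x::real. x) \<in> borel_measurable (\<nu> i)" by (rule meas_nu_borel) simp
  ultimately show ?thesis by (rule integrable_const_bound)
qed

lemma int_cl: "integrable (\<nu> i) cl"
proof -
  interpret prob_space "\<nu> i" by (rule prob)
  have "AE x in \<nu> i. norm (cl x) \<le> 1" using cl_bounds by (intro AE_I2) auto
  moreover have "cl \<in> borel_measurable (\<nu> i)" by (rule meas_nu_borel) simp
  ultimately show ?thesis by (rule integrable_const_bound)
qed

lemma m01: "0 \<le> m i" "m i \<le> 1"
proof -
  interpret prob_space "\<nu> i" by (rule prob)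
  have "AE x in \<nu> i. 0 \<le> x" using supp[of i] by eventually_elim auto
  then show "0 \<le> m i" unfolding m_def by (rule integral_nonneg_AE)
  have "AE x in \<nu> i. x \<le> 1" using supp[of i] by eventually_elim auto
  then have "m i \<le> (\<integral>x. 1 \<partial>\<nu> i)" unfolding m_def using int_id
    by (intro integral_mono_AE) auto
  then show "m i \<le> 1" by (simp add: prob_space.prob_space[OF prob])
qed

lemma integral_cl: "(\<integral>x. cl x \<partial>\<nu> i) = m i"
proof -
  have "AE x in \<nu> i. cl x = x" using supp[of i] by eventually_elim auto
  then show ?thesis unfolding m_def by (intro integral_cong_AE) (auto intro: meas_nu_borel)
qed

lemma integral_one_minus_cl: "(\<integral>x. 1 - cl x \<partial>\<nu> i) = 1 - m i"
proof -
  interpret prob_space "\<nu> i" by (rule prob)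
  have "(\<integral>x. 1 - cl x \<partial>\<nu> i) = (\<integral>x. 1 \<partial>\<nu> i) - (\<integral>x. cl x \<partial>\<nu> i)"
    using int_cl by (intro Bochner_Integration.integral_diff) auto
  then show ?thesis using integral_cl by (simp add: prob_space.prob_space[OF prob])
qed

lemma mixing:
  "(\<integral>p. majority_prob (upk k p) n \<partial>PiM UNIV \<nu>) = majority_prob (upk k m) n"
proof -
  interpret P: product_prob_space \<nu> UNIV by (rule pps)
  define \<phi> where "\<phi> = (\<lambda>X i y. if X i then cl (if i < k then 1 else y) else 1 - cl (if i < k then 1 else y))"
  have meas: "\<phi> X i \<in> borel_measurable borel" for X i unfolding \<phi>_def by measurable
  have bnd: "\<bar>\<phi> X i y\<bar> \<le> 1" for X i y unfolding \<phi>_def using cl_bounds[of y] cl_bounds[of 1] by auto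
  have wt_eq: "wt (upk k p) n X = (\<Prod>i\<in>{..<n}. \<phi> X i (p i))" for p X
    unfolding wt_def upk_def \<phi>_def by (intro prod.cong) auto
  have int_phi: "(\<integral>y. \<phi> X i y \<partial>\<nu> i) = (if X i then cl (upk k m i) else 1 - cl (upk k m i))" for X i
  proof -
    interpret prob_space "\<nu> i" by (rule prob)
    show ?thesis
    proof (cases "i < k")
      case True then show ?thesis by (simp add: \<phi>_def upk_def prob_space.prob_space[OF prob])
    next
      case False
      have "cl (m i) = m i" using m01[of i] by simp
      then show ?thesis using False by (simp add: \<phi>_def upk_def integral_cl integral_one_minus_cl)
    qed
  qed
  have integ: "integrable (PiM UNIV \<nu>) (\<lambda>p. wt (upk k p) n X)" for X
  proof -
    have "(\<lambda>p. \<Prod>i\<in>{..<n}. \<phi> X i (p i)) \<in> borel_measurable (PiM UNIV \<nu>)"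
      by (intro borel_measurable_prod measurable_compose[OF meas_comp meas])
    moreover have "\<bar>\<Prod>i\<in>{..<n}. \<phi> X i (p i)\<bar> \<le> 1" for p
      unfolding abs_prod using bnd by (intro prod_le_1) auto
    ultimately show ?thesis unfolding wt_eq
      by (intro finite_measure.integrable_const_bound[where B=1, OF prob_space.finite_measure[OF prob_space_PiM[OF prob]]]) auto
  qed
  have "(\<integral>p. majority_prob (upk k p) n \<partial>PiM UNIV \<nu>) =
      (\<integral>p. (\<Sum>X\<in>W n. (if real (card {i\<in>{..<n}. X i}) > real n / 2 then 1 else 0) * wt (upk k p) n X) \<partial>PiM UNIV \<nu>)"
    unfolding majority_prob_formula ..
  also have "\<dots> = (\<Sum>X\<in>W n. (if real (card {i\<in>{..<n}. X i}) > real n / 2 then 1 else 0) * (\<integral>p. wt (upk k p) n X \<partial>PiM UNIV \<nu>))"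
    using integ by (subst Bochner_Integration.integral_sum) auto
  also have "\<dots> = (\<Sum>X\<in>W n. (if real (card {i\<in>{..<n}. X i}) > real n / 2 then 1 else 0) * wt (upk k m) n X)"
  proof (intro sum.cong refl arg_cong2[where f="(*)"])
    fix X
    have "(\<integral>p. wt (upk k p) n X \<partial>PiM UNIV \<nu>) = (\<Prod>i\<in>{..<n}. \<integral>y. \<phi> X i y \<partial>\<nu> i)"
      unfolding wt_eq by (rule integral_prod_comp[OF _ meas bnd]) simp
    also have "\<dots> = wt (upk k m) n X" unfolding int_phi wt_def ..
    finally show "(\<integral>p. wt (upk k p) n X \<partial>PiM UNIV \<nu>) = wt (upk k m) n X" .
  qed
  also have "\<dots> = majority_prob (upk k m) n" unfolding majority_prob_formula ..
  finally show ?thesis .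
qed

end


lemma LIMSEQ_nat_iff:
  fixes X :: "nat \<Rightarrow> real"
  shows "X \<longlonglongrightarrow> L \<longleftrightarrow> (\<forall>e::nat. \<exists>N::nat. \<forall>k\<ge>N. \<bar>X k - L\<bar> < 1 / real (Suc e))"
proof
  assume lim: "X \<longlonglongrightarrow> L"
  show "\<forall>e::nat. \<exists>N::nat. \<forall>k\<ge>N. \<bar>X k - L\<bar> < 1 / real (Suc e)"
  proof
    fix e :: nat
    have "(1::real) / real (Suc e) > 0" by simp
    then obtain N where "\<forall>n\<ge>N. dist (X n) L < 1 / real (Suc e)"
      using lim[unfolded lim_sequentially] by blast
    then show "\<exists>N::nat. \<forall>k\<ge>N. \<bar>X k - L\<bar> < 1 / real (Suc e)"
      unfolding dist_real_def by blast
  qed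
next
  assume H: "\<forall>e::nat. \<exists>N::nat. \<forall>k\<ge>N. \<bar>X k - L\<bar> < 1 / real (Suc e)"
  show "X \<longlonglongrightarrow> L" unfolding lim_sequentially
  proof (intro allI impI)
    fix r :: real assume "r > 0"
    then obtain n :: nat where n: "n > 0" "inverse (real n) < r" using ex_inverse_of_nat_less by blast
    define e where "e = n - 1"
    have "Suc e = n" using n by (simp add: e_def)
    then have e: "1 / real (Suc e) < r" using n by (simp add: inverse_eq_divide)
    obtain N where N: "\<forall>k\<ge>N. \<bar>X k - L\<bar> < 1 / real (Suc e)" using H by blast
    have "\<forall>k\<ge>N. dist (X k) L < r"
    proof (intro allI impI)
      fix k assume "N \<le> k"
      then have "\<bar>X k - L\<bar> < 1 / real (Suc e)" using N by blast
      then show "dist (X k) L < r" using e unfolding dist_real_def by linarith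
    qed
    then show "\<exists>no. \<forall>n\<ge>no. dist (X n) L < r" by blast
  qed
qed

lemma CJP_pred:
  assumes [measurable]: "\<And>i. (\<lambda>x. F x i) \<in> borel_measurable N"
  shows "Measurable.pred N (\<lambda>x. F x \<in> CJP)"
proof -
  have [measurable]: "(\<lambda>x. majority_prob (F x) n) \<in> borel_measurable N" for n
    by (rule majority_prob_measurable) simp
  have eq: "(F x \<in> CJP) = ((\<forall>i. 0 \<le> F x i \<and> F x i \<le> 1) \<and>
     (\<forall>e::nat. \<exists>N::nat. \<forall>k. N \<le> k \<longrightarrow> \<bar>majority_prob (F x) (2 * k + 1) - 1\<bar> < 1 / real (Suc e)))" for x
    unfolding CJP_def LIMSEQ_nat_iff by auto
  show ?thesis unfolding eq by measurable
qed

definition TT :: "(nat \<Rightarrow> real) set" where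
  "TT = {p. \<exists>j. \<forall>k\<ge>j. upk k p \<in> CJP}"

context
  fixes \<nu> :: "nat \<Rightarrow> real measure"
  assumes prob: "\<And>i. prob_space (\<nu> i)"
    and sets: "\<And>i. sets (\<nu> i) = sets borel"
    and supp: "\<And>i. AE x in \<nu> i. x \<in> {0..1}"
begin

lemma space_nu: "space (\<nu> i) = UNIV"
  using sets_eq_imp_space_eq[OF sets[of i]] by simp

lemma space_mu: "space (PiM UNIV \<nu>) = UNIV"
  by (auto simp: space_PiM space_nu)

lemma upk_meas: "(\<lambda>p. upk k p i) \<in> borel_measurable (PiM UNIV \<nu>)"
  unfolding upk_def using meas_comp[OF prob sets supp, of i] by simp

lemma CJP_sets: "CJP \<in> sets (PiM UNIV \<nu>)"
proof -
  have "Measurable.pred (PiM UNIV \<nu>) (\<lambda>p. (\<lambda>i. p i) \<in> CJP)"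
    by (rule CJP_pred) (rule meas_comp[OF prob sets supp])
  then have "{p \<in> space (PiM UNIV \<nu>). p \<in> CJP} \<in> sets (PiM UNIV \<nu>)" unfolding pred_def by simp
  then show ?thesis unfolding space_mu by simp
qed

lemma U_sets: "{p. upk k p \<in> CJP} \<in> sets (PiM UNIV \<nu>)"
proof -
  have "Measurable.pred (PiM UNIV \<nu>) (\<lambda>p. upk k p \<in> CJP)"
    by (rule CJP_pred) (rule upk_meas)
  then show ?thesis unfolding pred_def space_mu by simp
qed

lemma TT_sets: "TT \<in> sets (PiM UNIV \<nu>)"
proof -
  have [measurable]: "Measurable.pred (PiM UNIV \<nu>) (\<lambda>p. upk k p \<in> CJP)" for k
    by (rule CJP_pred) (rule upk_meas)
  have "Measurable.pred (PiM UNIV \<nu>) (\<lambda>p. \<exists>j::nat. \<forall>k::nat. j \<le> k \<longrightarrow> upk k p \<in> CJP)"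
    by measurable
  then show ?thesis unfolding pred_def space_mu TT_def by simp
qed

end


context
  fixes \<nu> :: "nat \<Rightarrow> real measure"
  assumes prob: "\<And>i. prob_space (\<nu> i)"
    and sets: "\<And>i. sets (\<nu> i) = sets borel"
    and supp: "\<And>i. AE x in \<nu> i. x \<in> {0..1}"
begin

lemma TT_shift: "(\<lambda>i. if i < n then 0 else p i) \<in> TT \<longleftrightarrow> p \<in> TT"
proof -
  have eq: "upk k (\<lambda>i. if i < n then 0 else p i) = upk k p" if "k \<ge> n" for k
    using that by (auto simp: upk_def fun_eq_iff)
  have *: "q \<in> TT \<longleftrightarrow> (\<exists>j. \<forall>k. max j n \<le> k \<longrightarrow> upk k q \<in> CJP)" for q
  proof
    assume "q \<in> TT"
    then obtain j where j: "\<forall>k. j \<le> k \<longrightarrow> upk k q \<in> CJP" unfolding TT_def by blast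
    have "\<forall>k. max j n \<le> k \<longrightarrow> upk k q \<in> CJP" using j by simp
    then show "\<exists>j. \<forall>k. max j n \<le> k \<longrightarrow> upk k q \<in> CJP" by blast
  next
    assume "\<exists>j. \<forall>k. max j n \<le> k \<longrightarrow> upk k q \<in> CJP"
    then obtain j where "\<forall>k. max j n \<le> k \<longrightarrow> upk k q \<in> CJP" by blast
    then show "q \<in> TT" unfolding TT_def by blast
  qed
  have "(\<forall>k. max j n \<le> k \<longrightarrow> upk k (\<lambda>i. if i < n then 0 else p i) \<in> CJP) \<longleftrightarrow>
        (\<forall>k. max j n \<le> k \<longrightarrow> upk k p \<in> CJP)" for j
    using eq by auto
  then show ?thesis unfolding * by simp
qed

lemma TT_01: "measure (PiM UNIV \<nu>) TT = 0 \<or> measure (PiM UNIV \<nu>) TT = 1"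
proof -
  interpret P: product_prob_space \<nu> UNIV by (rule pps[OF prob sets supp])
  have spnu: "space (\<nu> i) = UNIV" for i by (rule space_nu[OF prob sets supp])
  define M where "M = PiM UNIV \<nu>"
  interpret MP: prob_space M unfolding M_def by (rule prob_space_PiM) (rule prob)
  have spM: "space M = UNIV" unfolding M_def by (rule space_mu[OF prob sets supp])
  have rv: "MP.random_variable (\<nu> i) (\<lambda>p. p i)" for i
    unfolding M_def by (rule measurable_component_singleton) simp
  have "distr M (PiM UNIV \<nu>) (\<lambda>x. \<lambda>i\<in>UNIV. x i) = PiM UNIV (\<lambda>i. distr M (\<nu> i) (\<lambda>x. x i))"
  proof -
    have "(\<lambda>x::nat\<Rightarrow>real. \<lambda>i\<in>UNIV. x i) = (\<lambda>x. x)" by (simp add: fun_eq_iff)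
    then have "distr M (PiM UNIV \<nu>) (\<lambda>x. \<lambda>i\<in>UNIV. x i) = M"
      unfolding M_def by (simp add: distr_id2)
    also have "M = PiM UNIV (\<lambda>i. distr M (\<nu> i) (\<lambda>x. x i))"
      unfolding M_def by (intro PiM_cong refl P.PiM_component[symmetric]) simp
    finally show ?thesis .
  qed
  then have indep: "MP.indep_vars \<nu> (\<lambda>i p. p i) UNIV"
    using MP.indep_vars_iff_distr_eq_PiM[where I=UNIV and M'=\<nu> and X="\<lambda>i p. p i"] rv by simp
  define A where "A = (\<lambda>i. sigma_sets (space M) {(\<lambda>p. p i) -` B \<inter> space M | B. B \<in> sets (\<nu> i)})"
  have indA: "MP.indep_sets A UNIV" using indep unfolding MP.indep_vars_def A_def by simp
  have sA: "sigma_algebra (space M) (A i)" for i unfolding A_def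
    by (intro sigma_algebra_sigma_sets) auto
  have AP: "A i \<subseteq> Pow (space M)" for i using sA[of i] by (simp add: sigma_algebra_iff2)
  have tail: "TT \<in> MP.tail_events A"
    unfolding MP.tail_events_def
  proof
    fix n :: nat
    define G where "G = \<Union> (A ` {n..})"
    have GP: "G \<subseteq> Pow (space M)" unfolding G_def using AP by auto
    define N where "N = sigma (space M) G"
    have sN: "sets N = sigma_sets (space M) G" unfolding N_def using GP by (rule sets_measure_of)
    have spN: "space N = UNIV" unfolding N_def using GP spM by (simp add: space_measure_of)
    define h where "h = (\<lambda>(p::nat\<Rightarrow>real) i. if i < n then 0 else p i)"
    have hm: "h \<in> measurable N M" unfolding M_def h_def
    proof (rule measurable_PiM_single')
      fix i :: nat
      show "(\<lambda>\<omega>. if i < n then 0 else \<omega> i) \<in> measurable N (\<nu> i)"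
      proof (cases "i < n")
        case True
        have "(\<lambda>\<omega>::nat\<Rightarrow>real. 0::real) \<in> measurable N (\<nu> i)"
          by (rule measurable_const) (simp add: spnu)
        then show ?thesis using True by simp
      next
        case False
        have "(\<lambda>\<omega>::nat\<Rightarrow>real. \<omega> i) \<in> measurable N (\<nu> i)"
        proof (rule measurableI)
          fix x show "x i \<in> space (\<nu> i)" by (simp add: spnu)
        next
          fix B assume B: "B \<in> sets (\<nu> i)"
          have "(\<lambda>p. p i) -` B \<inter> space M \<in> A i" unfolding A_def
            using B by (intro sigma_sets.Basic) auto
          then have "(\<lambda>p. p i) -` B \<inter> space M \<in> G" unfolding G_def using False by auto
          then have "(\<lambda>p. p i) -` B \<inter> space M \<in> sets N" unfolding sN by (rule sigma_sets.Basic)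
          then show "(\<lambda>\<omega>. \<omega> i) -` B \<inter> space N \<in> sets N" using spN spM by simp
        qed
        then show ?thesis using False by simp
      qed
    next
      show "(\<lambda>\<omega> i. if i < n then 0 else \<omega> i) \<in> space N \<rightarrow> (\<Pi>\<^sub>E i\<in>UNIV. space (\<nu> i))"
        by (simp add: spnu)
    qed
    have TTM: "TT \<in> sets M" unfolding M_def by (rule TT_sets[OF prob sets supp])
    have "h -` TT \<inter> space N \<in> sets N" using hm TTM by (rule measurable_sets)
    moreover have "h -` TT \<inter> space N = TT"
      unfolding spN h_def using TT_shift by auto
    ultimately have "TT \<in> sets N" by simp
    then show "TT \<in> sigma_sets (space M) (\<Union> (A ` {n..}))" unfolding sN G_def .
  qed
  have "MP.prob TT = 0 \<or> MP.prob TT = 1"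
    by (rule MP.kolmogorov_0_1_law[OF sA indA tail])
  then show ?thesis unfolding M_def .
qed

end


lemma sum_ind_lt: "(\<Sum>i<n. if i < j then (1::real) else 0) = real (min n j)"
  by (induction n) (auto simp: min_def)

lemma majority_prob_le1: "majority_prob q n \<le> 1"
  unfolding majority_prob_cnt by simp

lemma majority_prob_ge0: "0 \<le> majority_prob q n"
  unfolding majority_prob_def by simp

theorem theorem4:
  fixes \<nu> :: "nat \<Rightarrow> real measure"
  assumes prob: "\<And>i. prob_space (\<nu> i)"
    and sets: "\<And>i. sets (\<nu> i) = sets borel"
    and supp: "\<And>i. AE x in \<nu> i. x \<in> {0..1}"
    and h1: "limsup (\<lambda>n. ereal (1 / sqrt (real n) *
               (\<Sum>i<n. ((\<integral>x. x \<partial>\<nu> i) - 1 / 2)))) < \<infinity>"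
    and h2: "liminf (\<lambda>n. ereal (1 / real n *
               (\<Sum>i<n. ((\<integral>x. x \<partial>\<nu> i) - (\<integral>x. x ^ 2 \<partial>\<nu> i))))) > 0"
    and h3: "limsup (\<lambda>n. ereal (1 / real n * (\<Sum>i<n. measure (\<nu> i) {1}))) < ereal (1 / 2)"
    and h4: "filterlim (\<lambda>n. sqrt (\<Sum>i<n. \<integral>x. (x - (\<integral>y. y \<partial>\<nu> i)) ^ 2 \<partial>\<nu> i))
               at_top sequentially"
  shows "CJP \<in> sets (PiM UNIV \<nu>) \<and> measure (PiM UNIV \<nu>) CJP = 0"
proof -
  define M where "M = PiM UNIV \<nu>"
  interpret P: product_prob_space \<nu> UNIV by (rule pps[OF prob sets supp])
  interpret MP: prob_space M unfolding M_def by (rule prob_space_PiM) (rule prob)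
  have spM: "space M = UNIV" unfolding M_def by (rule space_mu[OF prob sets supp])
  have CJPs: "CJP \<in> sets M" unfolding M_def by (rule CJP_sets[OF prob sets supp])
  have TTs: "TT \<in> sets M" unfolding M_def by (rule TT_sets[OF prob sets supp])
  have Us: "{p. upk k p \<in> CJP} \<in> sets M" for k unfolding M_def by (rule U_sets[OF prob sets supp])
  define mm where "mm = m \<nu>"
  have mm_def': "mm i = (\<integral>x. x \<partial>\<nu> i)" for i unfolding mm_def m_def[OF prob sets supp] ..
  have mm01: "0 \<le> mm i" "mm i \<le> 1" for i unfolding mm_def using m01[OF prob sets supp] by auto
  have upk_CJP: "upk k p \<in> CJP" if "p \<in> CJP" for p k
  proof -
    have p01: "\<forall>i. p i \<in> {0..1}" and lim: "(\<lambda>n. majority_prob p (2 * n + 1)) \<longlonglongrightarrow> 1"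
      using that unfolding CJP_def by auto
    have "\<forall>i. upk k p i \<in> {0..1}" using p01 by (auto simp: upk_def)
    moreover have "(\<lambda>n. majority_prob (upk k p) (2 * n + 1)) \<longlonglongrightarrow> 1"
    proof (rule tendsto_sandwich[OF _ _ lim tendsto_const])
      show "\<forall>\<^sub>F n in sequentially. majority_prob p (2 * n + 1) \<le> majority_prob (upk k p) (2 * n + 1)"
        by (intro always_eventually allI majority_prob_mono) (auto simp: upk_def cl_bounds)
      show "\<forall>\<^sub>F n in sequentially. majority_prob (upk k p) (2 * n + 1) \<le> 1"
        by (intro always_eventually allI majority_prob_le1)
    qed
    ultimately show ?thesis unfolding CJP_def by simp
  qed
  have CT: "CJP \<subseteq> TT" unfolding TT_def using upk_CJP by blast
  have "measure M CJP \<le> measure M TT" using CT TTs by (intro MP.finite_measure_mono)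
  moreover have "measure M TT \<noteq> 1"
  proof
    assume T1: "measure M TT = 1"
    obtain C :: real where C: "\<forall>\<^sub>F n in sequentially. ereal (1 / sqrt (real n) * (\<Sum>i<n. (mm i - 1 / 2))) < ereal C"
    proof -
      have "limsup (\<lambda>n. ereal (1 / sqrt (real n) * (\<Sum>i<n. (mm i - 1 / 2)))) \<noteq> \<infinity>"
        using h1 unfolding mm_def' by simp
      then obtain r :: nat where "limsup (\<lambda>n. ereal (1 / sqrt (real n) * (\<Sum>i<n. (mm i - 1 / 2)))) < ereal (real r)"
        unfolding less_PInf_Ex_of_nat by blast
      then show ?thesis using that by (blast dest: Limsup_lessD)
    qed
    obtain c :: real where c0: "c > 0" and
      c: "\<forall>\<^sub>F n in sequentially. ereal c < ereal (1 / real n * (\<Sum>i<n. (mm i - (\<integral>x. x ^ 2 \<partial>\<nu> i))))"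
    proof -
      obtain z where z: "0 < ereal z" "ereal z < liminf (\<lambda>n. ereal (1 / real n *
               (\<Sum>i<n. ((\<integral>x. x \<partial>\<nu> i) - (\<integral>x. x ^ 2 \<partial>\<nu> i)))))"
        using ereal_dense2[OF h2] by blast
      then show ?thesis using that[of z] unfolding mm_def' by (auto dest: less_LiminfD)
    qed
    have var: "mm i - (\<integral>x. x ^ 2 \<partial>\<nu> i) \<le> mm i * (1 - mm i)" for i
    proof -
      have i1: "integrable (\<nu> i) (\<lambda>x. x)" by (rule int_id[OF prob sets supp])
      have i2: "integrable (\<nu> i) (\<lambda>x. x^2)"
      proof (rule finite_measure.integrable_const_bound[where B=1, OF prob_space.finite_measure[OF prob]])
        show "AE x in \<nu> i. norm (x^2) \<le> 1" using supp[of i]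
          by eventually_elim (auto simp: abs_square_le_1)
        show "(\<lambda>x::real. x^2) \<in> borel_measurable (\<nu> i)" by (rule meas_nu_borel[OF prob sets supp]) simp
      qed
      have "0 \<le> (\<integral>x. (x - (\<integral>y. y \<partial>\<nu> i))\<^sup>2 \<partial>\<nu> i)" by (intro integral_nonneg_AE) auto
      also have "\<dots> = (\<integral>x. x\<^sup>2 \<partial>\<nu> i) - (\<integral>y. y \<partial>\<nu> i)\<^sup>2"
        by (rule prob_space.variance_eq[OF prob i1 i2])
      also have "\<dots> = (\<integral>x. x ^ 2 \<partial>\<nu> i) - (mm i)^2" unfolding mm_def' ..
      finally show ?thesis by (simp add: power2_eq_square algebra_simps)
    qed
    obtain \<delta> N0 where \<delta>0: "\<delta> > 0" and D: "\<And>q n. n \<ge> N0 \<Longrightarrow> (\<And>i. 0 \<le> q i \<and> q i \<le> 1) \<Longrightarrow>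
        (\<Sum>i<n. q i) \<le> real n / 2 + (C + 1) * sqrt (real n) \<Longrightarrow>
        c / 2 * real n \<le> (\<Sum>i<n. q i * (1 - q i)) \<Longrightarrow> majority_prob q n \<le> 1 - \<delta>"
      using D_main[of "c/2" "C + 1"] c0 by auto
    define U where "U = (\<lambda>j. {p. upk j p \<in> CJP})"
    have incU: "incseq U"
    proof (rule incseq_SucI)
      fix j show "U j \<subseteq> U (Suc j)"
      proof
        fix p assume "p \<in> U j"
        then have "upk j p \<in> CJP" unfolding U_def by simp
        then have "upk (Suc j) (upk j p) \<in> CJP" by (rule upk_CJP)
        moreover have "upk (Suc j) (upk j p) = upk (Suc j) p" by (auto simp: upk_def fun_eq_iff)
        ultimately show "p \<in> U (Suc j)" unfolding U_def by simp
      qed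
    qed
    have TU: "TT \<subseteq> (\<Union>j. U j)" unfolding TT_def U_def by auto
    have "(\<lambda>j. measure M (U j)) \<longlonglongrightarrow> measure M (\<Union>j. U j)"
      using Us incU by (intro Lim_measure_incseq) (auto simp: U_def)
    moreover have "measure M (\<Union>j. U j) = 1"
    proof -
      have "measure M TT \<le> measure M (\<Union>j. U j)" using TU Us by (intro MP.finite_measure_mono) (auto simp: U_def)
      moreover have "measure M (\<Union>j. U j) \<le> 1" by simp
      ultimately show ?thesis using T1 by linarith
    qed
    ultimately have "\<forall>\<^sub>F j in sequentially. measure M (U j) > 1 - \<delta> / 2"
      using \<delta>0 by (intro order_tendstoD) auto
    then obtain j where Uj: "measure M (U j) > 1 - \<delta> / 2" by (metis eventually_sequentially order_refl)
    define f where "f = (\<lambda>k p. majority_prob (upk j p) (2 * k + 1))"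
    define s where "s = (\<lambda>k p. indicator (U j) p * f k p)"
    have fm: "f k \<in> borel_measurable M" for k unfolding f_def M_def
      by (rule majority_prob_measurable) (rule upk_meas[OF prob sets supp])
    have UjM: "U j \<in> sets M" unfolding U_def by (rule Us)
    have sm: "s k \<in> borel_measurable M" for k unfolding s_def
      using fm UjM by measurable
    have "(\<lambda>k. integral\<^sup>L M (s k)) \<longlonglongrightarrow> integral\<^sup>L M (indicator (U j))"
    proof (rule integral_dominated_convergence[where w="\<lambda>_. 1"])
      show "indicator (U j) \<in> borel_measurable M" using UjM by simp
      show "\<And>k. s k \<in> borel_measurable M" by (rule sm)
      show "integrable M (\<lambda>_. 1::real)" by simp
      show "AE p in M. (\<lambda>k. s k p) \<longlonglongrightarrow> indicator (U j) p"
      proof (intro AE_I2)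
        fix p
        show "(\<lambda>k. s k p) \<longlonglongrightarrow> indicator (U j) p"
        proof (cases "p \<in> U j")
          case True
          then have "(\<lambda>k. f k p) \<longlonglongrightarrow> 1" unfolding U_def f_def CJP_def by simp
          then show ?thesis using True by (simp add: s_def)
        next
          case False
          then show ?thesis by (simp add: s_def)
        qed
      qed
      show "\<And>k. AE p in M. norm (s k p) \<le> 1"
        by (intro AE_I2) (auto simp: s_def f_def indicator_def majority_prob_le1 majority_prob_ge0)
    qed
    moreover have "integral\<^sup>L M (indicator (U j)) = measure M (U j)" using UjM by simp
    ultimately have "\<forall>\<^sub>F k in sequentially. integral\<^sup>L M (s k) > 1 - \<delta>"
      using Uj \<delta>0 by (intro order_tendstoD(1)) auto
    moreover have "integral\<^sup>L M (s k) \<le> majority_prob (upk j mm) (2 * k + 1)" for k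
    proof -
      have intf: "integrable M (f k)"
        by (rule MP.integrable_const_bound[where B=1, OF _ fm])
           (auto simp: f_def majority_prob_le1 majority_prob_ge0 intro!: AE_I2)
      have ints: "integrable M (s k)"
        by (rule MP.integrable_const_bound[where B=1, OF _ sm])
           (auto simp: s_def f_def indicator_def majority_prob_le1 majority_prob_ge0 intro!: AE_I2)
      have "integral\<^sup>L M (s k) \<le> integral\<^sup>L M (f k)"
        using intf ints by (intro integral_mono) (auto simp: s_def indicator_def f_def majority_prob_ge0)
      also have "integral\<^sup>L M (f k) = majority_prob (upk j mm) (2 * k + 1)"
        unfolding f_def M_def mm_def by (rule mixing[OF prob sets supp])
      finally show ?thesis .
    qed
    ultimately have ev_big: "\<forall>\<^sub>F k in sequentially. majority_prob (upk j mm) (2 * k + 1) > 1 - \<delta>"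
      by (metis (no_types, lifting) eventually_mono order_less_le_trans)
    obtain K1 where K1: "\<And>n. n \<ge> K1 \<Longrightarrow> ereal (1 / sqrt (real n) * (\<Sum>i<n. (mm i - 1 / 2))) < ereal C"
      using C unfolding eventually_sequentially by blast
    obtain K2 where K2: "\<And>n. n \<ge> K2 \<Longrightarrow> ereal c < ereal (1 / real n * (\<Sum>i<n. (mm i - (\<integral>x. x ^ 2 \<partial>\<nu> i))))"
      using c unfolding eventually_sequentially by blast
    obtain K3 where K3: "\<And>k. k \<ge> K3 \<Longrightarrow> majority_prob (upk j mm) (2 * k + 1) > 1 - \<delta>"
      using ev_big unfolding eventually_sequentially by blast
    define a where "a = nat \<lceil>2 * real j / c\<rceil>"
    define k where "k = K1 + K2 + K3 + N0 + j * j + a + 1"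
    define n where "n = 2 * k + 1"
    have kn: "k \<le> n" "n \<ge> 1" unfolding n_def by auto
    have nK1: "n \<ge> K1" and nK2: "n \<ge> K2" and nN0: "n \<ge> N0" and kK3: "k \<ge> K3"
      unfolding n_def k_def by auto
    have njj: "real n \<ge> real j * real j"
    proof -
      have "j * j \<le> n" unfolding n_def k_def by simp
      then show ?thesis by (metis of_nat_le_iff of_nat_mult)
    qed
    have nc: "real n \<ge> 2 * real j / c"
    proof -
      have "a \<le> n" unfolding n_def k_def by simp
      then have "real a \<le> real n" by (simp only: of_nat_le_iff)
      moreover have "2 * real j / c \<le> real a" unfolding a_def by (rule real_nat_ceiling_ge)
      ultimately show ?thesis by linarith
    qed
    have sqn: "sqrt (real n) > 0" using kn by simp
    define q where "q = upk j mm"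
    have q01: "0 \<le> q i \<and> q i \<le> 1" for i using mm01[of i] by (simp add: q_def upk_def)
    have big: "majority_prob q n > 1 - \<delta>" using K3[OF kK3] unfolding q_def n_def .
    have sum1: "(\<Sum>i<n. q i) \<le> real n / 2 + (C + 1) * sqrt (real n)"
    proof -
      have "(\<Sum>i<n. q i) \<le> (\<Sum>i<n. mm i + (if i < j then 1 else 0))"
        using mm01 by (intro sum_mono) (auto simp: q_def upk_def)
      also have "\<dots> = (\<Sum>i<n. mm i) + real (min n j)"
        by (simp add: sum.distrib sum_ind_lt)
      also have "real (min n j) \<le> sqrt (real n)"
      proof -
        have "real j \<le> sqrt (real n)" using njj by (simp add: real_le_rsqrt power2_eq_square)
        then show ?thesis by linarith
      qed
      also have "(\<Sum>i<n. mm i) \<le> real n / 2 + C * sqrt (real n)"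
      proof -
        have "1 / sqrt (real n) * (\<Sum>i<n. (mm i - 1 / 2)) < C" using K1[OF nK1] by simp
        then have "(\<Sum>i<n. (mm i - 1 / 2)) < C * sqrt (real n)" using sqn by (simp add: field_simps)
        moreover have "(\<Sum>i<n. (mm i - 1 / 2)) = (\<Sum>i<n. mm i) - real n / 2" by (simp add: sum_subtractf)
        ultimately show ?thesis by simp
      qed
      finally show ?thesis by (simp add: algebra_simps)
    qed
    have sum2: "c / 2 * real n \<le> (\<Sum>i<n. q i * (1 - q i))"
    proof -
      have "c < 1 / real n * (\<Sum>i<n. (mm i - (\<integral>x. x ^ 2 \<partial>\<nu> i)))" using K2[OF nK2] by simp
      then have "c * real n < (\<Sum>i<n. (mm i - (\<integral>x. x ^ 2 \<partial>\<nu> i)))" using kn by (simp add: field_simps)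
      also have "\<dots> \<le> (\<Sum>i<n. mm i * (1 - mm i))" by (intro sum_mono var)
      also have "\<dots> \<le> (\<Sum>i<n. q i * (1 - q i) + (if i < j then 1 else 0))"
      proof (intro sum_mono)
        fix i
        have "mm i * (1 - mm i) \<le> 1" using mm01[of i] by (simp add: mult_le_one)
        then show "mm i * (1 - mm i) \<le> q i * (1 - q i) + (if i < j then 1 else 0)"
          by (auto simp: q_def upk_def)
      qed
      also have "\<dots> = (\<Sum>i<n. q i * (1 - q i)) + real (min n j)"
        by (simp add: sum.distrib sum_ind_lt)
      also have "real (min n j) \<le> c / 2 * real n"
      proof -
        have "2 * real j / c \<le> real n" by (rule nc)
        then have "2 * real j \<le> c * real n" using c0 by (simp add: divide_le_eq mult.commute)
        then show ?thesis by linarith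
      qed
      finally show ?thesis by linarith
    qed
    have "majority_prob q n \<le> 1 - \<delta>" using D[OF nN0 q01 sum1 sum2] .
    then show False using big by simp
  qed
  ultimately have le: "measure M CJP \<le> measure M TT" and ne: "measure M TT \<noteq> 1" by auto
  have "measure M TT = 0" using TT_01[where \<nu>=\<nu>, OF prob sets supp] ne unfolding M_def by auto
  then have "measure M CJP = 0" using le measure_nonneg[of M CJP] by linarith
  then show ?thesis using CJPs unfolding M_def by simp
qed


end
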